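(* Let $G$ be a compact group, $\mathcal{X},\mathcal{Y}$ finite-dimensional real normed vector spaces, $\rho_1:G\to\mathrm{GL}(\mathcal{X})$, $\rho_2:G\to\mathrm{GL}(\mathcal{Y})$ continuous representations, and $p_\omega(\cdot\mid\mathbf{x})$ a fixed $G$ equivariant conditional distribution on $G$. Let $\{f_\theta\}_\theta$ be a family of continuous functions $\mathcal{X}\to\mathcal{Y}$ that is a universal approximator, i.e. for every continuous $\psi:\mathcal{X}\to\mathcal{Y}$, every compact $\mathcal{K}\subseteq\mathcal{X}$ and every $\epsilon>0$ there is $\theta$ with $\sup_{\mathbf{x}\in\mathcal{K}}\|\psi(\mathbf{x})-f_\theta(\mathbf{x})\|\le\epsilon$. Define $\phi_{\theta,\omega}(\mathbf{x})=\mathbb{E}_{g\sim p_\omega(\cdot\mid\mathbf{x})}[\rho_2(g)f_\theta(\rho_1(g)^{-1}\mathbf{x})]$. Then $\{\phi_{\theta,\omega}\}_\theta$ is a universal approximator of $G$ equivariant functions: for every continuous $G$ equivariant $\psi:\mathcal{X}\to\mathcal{Y}$ (i.e. $\psi(\rho_1(g)\mathbf{x})=\rho_2(g)\psi(\mathbf{x})$ for all $g,\mathbf{x}$), every compact $\mathcal{K}\subseteq\mathcal{X}$ and every $\epsilon>0$, there exists $\theta$ with $\sup_{\mathbf{x}\in\mathcal{K}}\|\psi(\mathbf{x})-\phi_{\theta,\omega}(\mathbf{x})\|\le\epsilon$.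
   Context: A conditional distribution on $G$ is a family $\{p_\omega(\cdot\mid\mathbf{x})\}_{\mathbf{x}\in\mathcal{X}}$ of Borel probability measures on $G$. It is called $G$ equivariant if for all $\mathbf{x}\in\mathcal{X}$ and $g'\in G$, the pushforward of $p_\omega(\cdot\mid\mathbf{x})$ under left multiplication $g\mapsto g'g$ equals $p_\omega(\cdot\mid\rho_1(g')\mathbf{x})$ (for densities: $p_\omega(g\mid\mathbf{x})=p_\omega(g'g\mid\rho_1(g')\mathbf{x})$ for all $\mathbf{x},g,g'$). *)

theory Defs
  imports "HOL-Probability.Probability" "HOL-Algebra.Group"
begin

definition fin_dim_space :: "'a::real_vector itself \<Rightarrow> bool" where
  "fin_dim_space _ \<longleftrightarrow> (\<exists>B::'a set. finite B \<and> span B = UNIV)"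

definition compact_group :: "('g::t2_space) monoid \<Rightarrow> bool" where
  "compact_group G \<longleftrightarrow> group G \<and> carrier G = UNIV \<and> compact (UNIV :: 'g set) \<and>
     continuous_on UNIV (\<lambda>p::'g \<times> 'g. fst p \<otimes>\<^bsub>G\<^esub> snd p) \<and>
     continuous_on UNIV (\<lambda>g::'g. inv\<^bsub>G\<^esub> g)"

definition continuous_rep :: "'g monoid \<Rightarrow> ('g::topological_space \<Rightarrow> ('x::real_normed_vector \<Rightarrow>\<^sub>L 'x)) \<Rightarrow> bool" where
  "continuous_rep G \<rho> \<longleftrightarrow> continuous_on UNIV \<rho> \<and>
     (\<forall>g. bij (blinfun_apply (\<rho> g))) \<and>
     (\<forall>g h. \<rho> (g \<otimes>\<^bsub>G\<^esub> h) = \<rho> g o\<^sub>L \<rho> h) \<and>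
     \<rho> \<one>\<^bsub>G\<^esub> = id_blinfun"

definition equivariant_cond_dist ::
  "'g monoid \<Rightarrow> ('g::topological_space \<Rightarrow> ('x::real_normed_vector \<Rightarrow>\<^sub>L 'x)) \<Rightarrow> ('x \<Rightarrow> 'g measure) \<Rightarrow> bool" where
  "equivariant_cond_dist G \<rho>1 P \<longleftrightarrow>
     (\<forall>x. prob_space (P x) \<and> sets (P x) = sets borel) \<and>
     (\<forall>x g'. distr (P x) borel (\<lambda>g. g' \<otimes>\<^bsub>G\<^esub> g) = P (blinfun_apply (\<rho>1 g') x))"

definition universal_approximator ::
  "('p \<Rightarrow> 'x::real_normed_vector \<Rightarrow> 'y::real_normed_vector) \<Rightarrow> (('x \<Rightarrow> 'y) \<Rightarrow> bool) \<Rightarrow> bool" where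
  "universal_approximator f C \<longleftrightarrow>
     (\<forall>\<psi> K \<epsilon>. continuous_on UNIV \<psi> \<and> C \<psi> \<and> compact K \<and> \<epsilon> > 0 \<longrightarrow>
        (\<exists>\<theta>. \<forall>x\<in>K. norm (\<psi> x - f \<theta> x) \<le> \<epsilon>))"

definition equivariant_fun ::
  "('g \<Rightarrow> ('x::real_normed_vector \<Rightarrow>\<^sub>L 'x)) \<Rightarrow> ('g \<Rightarrow> ('y::real_normed_vector \<Rightarrow>\<^sub>L 'y)) \<Rightarrow> ('x \<Rightarrow> 'y) \<Rightarrow> bool" where
  "equivariant_fun \<rho>1 \<rho>2 \<psi> \<longleftrightarrow> (\<forall>g x. \<psi> (blinfun_apply (\<rho>1 g) x) = blinfun_apply (\<rho>2 g) (\<psi> x))"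

definition sym_fun ::
  "('g::topological_space \<Rightarrow> ('x::real_normed_vector \<Rightarrow>\<^sub>L 'x)) \<Rightarrow> ('g \<Rightarrow> ('y::{banach,second_countable_topology} \<Rightarrow>\<^sub>L 'y))
    \<Rightarrow> ('x \<Rightarrow> 'g measure) \<Rightarrow> ('x \<Rightarrow> 'y) \<Rightarrow> 'x \<Rightarrow> 'y" where
  "sym_fun \<rho>1 \<rho>2 P h x = (LINT g|P x. blinfun_apply (\<rho>2 g) (h (Hilbert_Choice.inv (blinfun_apply (\<rho>1 g)) x)))"

end

theory Submission
  imports Defs
begin

lemma norm_int_bound_aux:
  fixes P :: "'g measure" and h :: "'g \<Rightarrow> 'y::{banach,second_countable_topology}"
  assumes "integrable P h" "integrable P (\<lambda>_. e)" "\<And>g. norm (h g) \<le> e"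
  shows "norm (LINT g|P. h g) \<le> (LINT g|P. e)"
proof -
  have "norm (LINT g|P. h g) \<le> (LINT g|P. norm (h g))" by (rule integral_norm_bound)
  also have "\<dots> \<le> (LINT g|P. e)"
    using assms by (intro integral_mono integrable_norm) auto
  finally show ?thesis .
qed

theorem theorem2:
  fixes G :: "('g::t2_space) monoid"
    and \<rho>1 :: "'g \<Rightarrow> ('x::real_normed_vector \<Rightarrow>\<^sub>L 'x)"
    and \<rho>2 :: "'g \<Rightarrow> ('y::{banach,second_countable_topology} \<Rightarrow>\<^sub>L 'y)"
    and P :: "'x \<Rightarrow> 'g measure"
    and f :: "'p \<Rightarrow> 'x \<Rightarrow> 'y"
  assumes "compact_group G"
    and "fin_dim_space TYPE('x)" and "fin_dim_space TYPE('y)"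
    and "continuous_rep G \<rho>1" and "continuous_rep G \<rho>2"
    and "equivariant_cond_dist G \<rho>1 P"
    and "\<forall>\<theta>. continuous_on UNIV (f \<theta>)"
    and "universal_approximator f (\<lambda>_. True)"
  shows "universal_approximator (\<lambda>\<theta>. sym_fun \<rho>1 \<rho>2 P (f \<theta>)) (equivariant_fun \<rho>1 \<rho>2)"
proof -
  have grp: "group G" and car: "carrier G = UNIV" and cpt: "compact (UNIV::'g set)"
    and cinv: "continuous_on UNIV (\<lambda>g::'g. inv\<^bsub>G\<^esub> g)"
    using assms(1) unfolding compact_group_def by auto
  have c1: "continuous_on UNIV \<rho>1" and b1: "\<And>g. bij (blinfun_apply (\<rho>1 g))"
    and m1: "\<And>g h. \<rho>1 (g \<otimes>\<^bsub>G\<^esub> h) = \<rho>1 g o\<^sub>L \<rho>1 h" and o1: "\<rho>1 \<one>\<^bsub>G\<^esub> = id_blinfun"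
    using assms(4) unfolding continuous_rep_def by auto
  have c2: "continuous_on UNIV \<rho>2"
    and m2: "\<And>g h. \<rho>2 (g \<otimes>\<^bsub>G\<^esub> h) = \<rho>2 g o\<^sub>L \<rho>2 h" and o2: "\<rho>2 \<one>\<^bsub>G\<^esub> = id_blinfun"
    using assms(5) unfolding continuous_rep_def by auto
  have ps: "\<And>x. prob_space (P x)" and sP: "\<And>x. sets (P x) = sets borel"
    using assms(6) unfolding equivariant_cond_dist_def by auto
  have rinv: "\<And>g. g \<otimes>\<^bsub>G\<^esub> inv\<^bsub>G\<^esub> g = \<one>\<^bsub>G\<^esub>"
    using group.r_inv[OF grp] car by auto
  have ap: "\<And>g x. blinfun_apply (\<rho>1 g) (blinfun_apply (\<rho>1 (inv\<^bsub>G\<^esub> g)) x) = x"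
    using m1 rinv o1 by (metis blinfun_apply_blinfun_compose id_blinfun.rep_eq id_apply)
  have hinv: "\<And>g x. Hilbert_Choice.inv (blinfun_apply (\<rho>1 g)) x = blinfun_apply (\<rho>1 (inv\<^bsub>G\<^esub> g)) x"
    using b1 ap by (metis bij_is_inj inv_f_f)
  define \<iota> where "\<iota> = (\<lambda>(g, x). blinfun_apply (\<rho>1 (inv\<^bsub>G\<^esub> g)) x)"
  have ci: "continuous_on UNIV \<iota>"
    unfolding \<iota>_def case_prod_beta
    apply (rule bounded_bilinear.continuous_on[OF bounded_bilinear_blinfun_apply])
     apply (rule continuous_on_compose2[OF c1 continuous_on_compose2[OF cinv continuous_on_fst]]; simp)
    by (rule continuous_on_snd) simp
  obtain M where M: "M > 0" "\<And>g. norm (\<rho>2 g) \<le> M"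
  proof -
    have "bounded (range \<rho>2)" using compact_imp_bounded[OF compact_continuous_image[OF c2 cpt]] .
    then show ?thesis using that by (auto simp: bounded_pos)
  qed
  show ?thesis unfolding universal_approximator_def
  proof (intro allI impI)
    fix \<psi> :: "'x \<Rightarrow> 'y" and K :: "'x set" and \<epsilon>
    assume a: "continuous_on UNIV \<psi> \<and> equivariant_fun \<rho>1 \<rho>2 \<psi> \<and> compact K \<and> (\<epsilon>::real) > 0"
    define K' where "K' = \<iota> ` (UNIV \<times> K)"
    have "compact K'" unfolding K'_def
      using a compact_continuous_image[OF continuous_on_subset[OF ci] compact_Times[OF cpt]] by auto
    then obtain \<theta> where th: "\<And>x. x \<in> K' \<Longrightarrow> norm (\<psi> x - f \<theta> x) \<le> \<epsilon> / M"
    proof -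
      have "\<epsilon> / M > 0" using a M by simp
      then have "\<exists>\<theta>. \<forall>x\<in>K'. norm (\<psi> x - f \<theta> x) \<le> \<epsilon> / M"
        using assms(8) a \<open>compact K'\<close> unfolding universal_approximator_def by blast
      then show ?thesis using that by blast
    qed
    have eq: "\<And>g x. blinfun_apply (\<rho>2 g) (\<psi> (\<iota> (g, x))) = \<psi> x"
      using a ap unfolding equivariant_fun_def \<iota>_def by (metis case_prod_conv)
    show "\<exists>\<theta>. \<forall>x\<in>K. norm (\<psi> x - sym_fun \<rho>1 \<rho>2 P (f \<theta>) x) \<le> \<epsilon>"
    proof (intro exI ballI)
      fix x assume xK: "x \<in> K"
      have ct: "continuous_on UNIV (\<lambda>g. blinfun_apply (\<rho>2 g) (h (\<iota> (g, x))))"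
        if "continuous_on UNIV h" for h :: "'x \<Rightarrow> 'y"
        apply (rule bounded_bilinear.continuous_on[OF bounded_bilinear_blinfun_apply c2])
        apply (rule continuous_on_compose2[OF that continuous_on_compose2[OF ci]])
        by (auto intro!: continuous_intros)
      have meas: "(\<lambda>g. blinfun_apply (\<rho>2 g) (h (\<iota> (g, x)))) \<in> borel_measurable (P x)"
        if "continuous_on UNIV h" for h :: "'x \<Rightarrow> 'y"
        using borel_measurable_continuous_onI[OF ct[OF that]] measurable_cong_sets[OF sP[of x] refl, of borel]
        by (metis (no_types))
      have intg: "integrable (P x) (\<lambda>g. blinfun_apply (\<rho>2 g) (h (\<iota> (g, x))))"
        if "continuous_on UNIV h" for h :: "'x \<Rightarrow> 'y"
      proof -
        have "bounded (range (\<lambda>g. blinfun_apply (\<rho>2 g) (h (\<iota> (g, x)))))"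
          using compact_imp_bounded[OF compact_continuous_image[OF ct[OF that] cpt]] .
        then obtain B where "\<And>g. norm (blinfun_apply (\<rho>2 g) (h (\<iota> (g, x)))) \<le> B"
          by (auto simp: bounded_iff)
        then show ?thesis
          using finite_measure.integrable_const_bound[OF prob_space.finite_measure[OF ps] _ meas[OF that]]
          by auto
      qed
      have phi: "sym_fun \<rho>1 \<rho>2 P (f \<theta>) x = (LINT g|P x. blinfun_apply (\<rho>2 g) (f \<theta> (\<iota> (g, x))))"
        unfolding sym_fun_def hinv \<iota>_def by simp
      have psi: "\<psi> x = (LINT g|P x. blinfun_apply (\<rho>2 g) (\<psi> (\<iota> (g, x))))"
        using eq prob_space.prob_space[OF ps[of x]] by simp
      have i1: "integrable (P x) (\<lambda>g. blinfun_apply (\<rho>2 g) (\<psi> (\<iota> (g, x)) - f \<theta> (\<iota> (g, x))))"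
        using Bochner_Integration.integrable_diff[OF intg[of \<psi>] intg[of "f \<theta>"]] a assms(7)
        by (simp add: blinfun.diff_right)
      have i2: "integrable (P x) (\<lambda>g. \<epsilon>)"
        using prob_space.finite_measure[OF ps[of x]] finite_measure.integrable_const by blast
      have bd: "norm (blinfun_apply (\<rho>2 g) (\<psi> (\<iota> (g, x)) - f \<theta> (\<iota> (g, x)))) \<le> \<epsilon>" for g
      proof -
        have "\<iota> (g, x) \<in> K'" unfolding K'_def using xK by auto
        then have "norm (\<psi> (\<iota> (g, x)) - f \<theta> (\<iota> (g, x))) \<le> \<epsilon> / M" by (rule th)
        then have "norm (blinfun_apply (\<rho>2 g) (\<psi> (\<iota> (g, x)) - f \<theta> (\<iota> (g, x)))) \<le> M * (\<epsilon> / M)"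
          using norm_blinfun[of "\<rho>2 g"] M
          by (meson mult_mono norm_ge_zero order_trans)
        then show ?thesis using M by simp
      qed
      have nb: "norm (LINT g|P x. blinfun_apply (\<rho>2 g) (\<psi> (\<iota> (g, x)) - f \<theta> (\<iota> (g, x)))) \<le> (LINT g|P x. \<epsilon>)"
        by (rule norm_int_bound_aux[OF i1 i2 bd])
      have e1: "(LINT g|P x. \<epsilon>) = \<epsilon>" using prob_space.prob_space[OF ps[of x]] by simp
      have e2: "\<psi> x - sym_fun \<rho>1 \<rho>2 P (f \<theta>) x
          = (LINT g|P x. blinfun_apply (\<rho>2 g) (\<psi> (\<iota> (g, x)) - f \<theta> (\<iota> (g, x))))"
        unfolding phi psi
        using intg[of \<psi>] intg[of "f \<theta>"] a assms(7)
        by (simp add: blinfun.diff_right)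
      show "norm (\<psi> x - sym_fun \<rho>1 \<rho>2 P (f \<theta>) x) \<le> \<epsilon>"
        using nb unfolding e1 e2 .
    qed
  qed
qed

end
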